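(* Let $P$ be a polygon with vertex set $V$ and a non-empty dissection $D$, and let $d=\{\zeta,\eta\}\in D$ be such that $D = \{d\}\cup D_2$ where $D_2$ is a dissection of the subpolygon with vertex set $V_2 = \{\varepsilon \in V : \eta \le \varepsilon \le \zeta\}$. Let $U_1 = \{\varepsilon\in V : \zeta<\varepsilon<\eta\}$ and $U_2 = \{\varepsilon\in V : \eta<\varepsilon<\zeta\}$. Let $\alpha \in U_1$, $\beta \in U_2$, and let $\pi = (\pi_1,\dots,\pi_p) \in \mathcal{T}_{P,D}(\alpha,\beta)$ with $p\ge 3$, $\pi_2 = \zeta$ and $\pi_3 \neq \eta$. Then $\eta < \pi_i \le \zeta$ (i.e. $\pi_i \in U_2\cup\{\zeta\}$) for all $i \ge 2$.
   Context: A polygon is a finite set $V$ of at least three vertices with a cyclic order, pictured as a convex polygon in the plane with vertices anticlockwise. "$a\le\varepsilon\le b$" means $\varepsilon$ lies on the cyclic interval from $a$ to $b$ in the positive direction, endpoints included; "$<$" excludes the corresponding endpoint. A subpolygon is a subset of at least three vertices with induced cyclic order. A diagonal is a two-element subset of $V$ (edges included); non-edges are internal. Diagonals cross if they consist of four distinct vertices $\alpha,\beta,\gamma,\delta$ appearing cyclically as $\alpha,\gamma,\beta,\delta$ or $\alpha,\delta,\beta,\gamma$. A dissection is a set of pairwise non-crossing internal diagonals. For vertices $\pi_1\neq\pi_p$, a $T$-path from $\pi_1$ to $\pi_p$ w.r.t. $D$ is a tuple $(\pi_1,\dots,\pi_p)$ of vertices with: (i) $\{\pi_1,\pi_2\},\dots,\{\pi_{p-1},\pi_p\}$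 pairwise different diagonals; (ii) no $\{\pi_i,\pi_{i+1}\}$ crosses a diagonal of $D$; (iii) each $\{\pi_{2j},\pi_{2j+1}\}$ lies in $D$, and these cross the segment $\{\pi_1,\pi_p\}$ at pairwise different points progressing monotonically from $\pi_1$ to $\pi_p$. $\mathcal{T}_{P,D}(\alpha,\beta)$ is the set of such paths from $\alpha$ to $\beta$. *)

theory Defs
  imports Main
begin

text \<open>The polygon P has vertex set {0..<n} (n >= 3) with the cyclic order
  0, 1, ..., n-1, 0 (anticlockwise). Subpolygons carry the induced cyclic order.\<close>

definition cdist :: "nat \<Rightarrow> nat \<Rightarrow> nat \<Rightarrow> nat" where
  "cdist n a x = nat ((int x - int a) mod int n)"

text \<open>a <= e <= b (cyclic interval from a to b, endpoints included)\<close>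
definition cyc_cc :: "nat \<Rightarrow> nat \<Rightarrow> nat \<Rightarrow> nat \<Rightarrow> bool" where
  "cyc_cc n a e b \<longleftrightarrow> cdist n a e \<le> cdist n a b"

definition cyc_oo :: "nat \<Rightarrow> nat \<Rightarrow> nat \<Rightarrow> nat \<Rightarrow> bool" where
  "cyc_oo n a e b \<longleftrightarrow> 0 < cdist n a e \<and> cdist n a e < cdist n a b"

definition cyc_oc :: "nat \<Rightarrow> nat \<Rightarrow> nat \<Rightarrow> nat \<Rightarrow> bool" where
  "cyc_oc n a e b \<longleftrightarrow> 0 < cdist n a e \<and> cdist n a e \<le> cdist n a b"

definition cyc_order4 :: "nat \<Rightarrow> nat \<Rightarrow> nat \<Rightarrow> nat \<Rightarrow> nat \<Rightarrow> bool" where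
  "cyc_order4 n a b c d \<longleftrightarrow> distinct [a, b, c, d] \<and>
     cdist n a b < cdist n a c \<and> cdist n a c < cdist n a d"

definition crosses :: "nat \<Rightarrow> nat set \<Rightarrow> nat set \<Rightarrow> bool" where
  "crosses n d1 d2 \<longleftrightarrow> (\<exists>\<alpha> \<beta> \<gamma> \<delta>. d1 = {\<alpha>, \<beta>} \<and> d2 = {\<gamma>, \<delta>} \<and>
     distinct [\<alpha>, \<beta>, \<gamma>, \<delta>] \<and>
     (cyc_order4 n \<alpha> \<gamma> \<beta> \<delta> \<or> cyc_order4 n \<alpha> \<delta> \<beta> \<gamma>))"

definition is_diagonal :: "nat set \<Rightarrow> nat set \<Rightarrow> bool" where
  "is_diagonal W e \<longleftrightarrow> (\<exists>a b. e = {a, b} \<and> a \<in> W \<and> b \<in> W \<and> a \<noteq> b)"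

definition is_edge :: "nat \<Rightarrow> nat set \<Rightarrow> nat set \<Rightarrow> bool" where
  "is_edge n W e \<longleftrightarrow> (\<exists>a b. e = {a, b} \<and> a \<in> W \<and> b \<in> W \<and> a \<noteq> b \<and>
     ((\<nexists>w. w \<in> W \<and> cyc_oo n a w b) \<or> (\<nexists>w. w \<in> W \<and> cyc_oo n b w a)))"

definition is_internal :: "nat \<Rightarrow> nat set \<Rightarrow> nat set \<Rightarrow> bool" where
  "is_internal n W e \<longleftrightarrow> is_diagonal W e \<and> \<not> is_edge n W e"

definition is_dissection :: "nat \<Rightarrow> nat set \<Rightarrow> nat set set \<Rightarrow> bool" where
  "is_dissection n W D \<longleftrightarrow> W \<subseteq> {0..<n} \<and> 3 \<le> card W \<and>
     (\<forall>e\<in>D. is_internal n W e) \<and> (\<forall>e1\<in>D. \<forall>e2\<in>D. \<not> crosses n e1 e2)"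

text \<open>For diagonals e1, e2 crossing the segment {a,b}: the crossing point of e1
  comes strictly before that of e2 when walking from a to b.  (Combinatorial
  rendering: e1 separates a from e2.)\<close>
definition cross_before :: "nat \<Rightarrow> nat \<Rightarrow> nat \<Rightarrow> nat set \<Rightarrow> nat set \<Rightarrow> bool" where
  "cross_before n a b e1 e2 \<longleftrightarrow> e1 \<noteq> e2 \<and> (\<exists>x1 y1 x2 y2. e1 = {x1, y1} \<and> e2 = {x2, y2} \<and>
     cyc_oo n a x1 b \<and> cyc_oo n a x2 b \<and> cyc_oo n b y1 a \<and> cyc_oo n b y2 a \<and>
     cdist n a x1 \<le> cdist n a x2 \<and> cdist n b y2 \<le> cdist n b y1)"

text \<open>T-paths (lists, 0-indexed: pi ! (i-1) is the vertex pi_i of the paper)\<close>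
definition T_paths :: "nat \<Rightarrow> nat set set \<Rightarrow> nat \<Rightarrow> nat \<Rightarrow> nat list set" where
  "T_paths n D a b = {pi. a \<noteq> b \<and> 2 \<le> length pi \<and> hd pi = a \<and> last pi = b \<and>
     set pi \<subseteq> {0..<n} \<and>
     \<comment> \<open>(i)\<close>
     (\<forall>i. Suc i < length pi \<longrightarrow> is_diagonal {0..<n} {pi ! i, pi ! Suc i}) \<and>
     (\<forall>i j. Suc i < length pi \<and> Suc j < length pi \<and> i \<noteq> j \<longrightarrow>
        {pi ! i, pi ! Suc i} \<noteq> {pi ! j, pi ! Suc j}) \<and>
     \<comment> \<open>(ii)\<close>
     (\<forall>i. Suc i < length pi \<longrightarrow> (\<forall>e\<in>D. \<not> crosses n {pi ! i, pi ! Suc i} e)) \<and>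
     \<comment> \<open>(iii): 0-indexed odd k corresponds to the paper's pi_{2j}, pi_{2j+1}\<close>
     (\<forall>k. odd k \<and> Suc k < length pi \<longrightarrow>
        {pi ! k, pi ! Suc k} \<in> D \<and> crosses n {pi ! k, pi ! Suc k} {a, b}) \<and>
     (\<forall>k l. odd k \<and> odd l \<and> k < l \<and> Suc l < length pi \<longrightarrow>
        cross_before n a b {pi ! k, pi ! Suc k} {pi ! l, pi ! Suc l})}"

end

theory Submission
  imports Defs
begin

lemma cdist_eq: "a < n \<Longrightarrow> x < n \<Longrightarrow> cdist n a x = (if a \<le> x then x - a else n + x - a)"
proof (cases "a \<le> x")
  case True
  assume "a < n" "x < n"
  then have "(int x - int a) mod int n = int x - int a" using True by (intro mod_pos_pos_trivial) auto
  then show ?thesis using True unfolding cdist_def by simp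
next
  case False
  assume "a < n" "x < n"
  have "(int x - int a) mod int n = (int x - int a + int n) mod int n" by simp
  also have "\<dots> = int x - int a + int n" using False \<open>a<n\<close> \<open>x<n\<close> by (intro mod_pos_pos_trivial) auto
  finally show ?thesis using False unfolding cdist_def by simp
qed

lemma C: "\<lbrakk>a<n; b<n; z<n; e<n; c<n; x<n;
  cyc_oo n z a e; cyc_oo n e b z; z \<noteq> e; cyc_cc n e c z; c \<noteq> e; cyc_oo n a c b;
  cdist n a c \<le> cdist n a x; x = e\<rbrakk> \<Longrightarrow> False"
  unfolding cyc_oo_def cyc_cc_def using [[simp_trace=false]] by (simp add: cdist_eq split: if_splits; linarith)

lemma B: "\<lbrakk>a<n; b<n; z<n; e<n; y<n;
  cyc_oo n z a e; cyc_oo n e b z; z \<noteq> e; cyc_oo n b y a\<rbrakk> \<Longrightarrow> y \<noteq> e"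
  unfolding cyc_oo_def cyc_cc_def using [[simp_trace=false]] by (simp add: cdist_eq split: if_splits; linarith)

lemma X1: "\<lbrakk>a<n; b<n; z<n; e<n;
  cyc_oo n z a e; cyc_oo n e b z; z \<noteq> e\<rbrakk> \<Longrightarrow> \<not> cyc_oo n a z b"
  unfolding cyc_oo_def cyc_cc_def using [[simp_trace=false]] by (simp add: cdist_eq split: if_splits; linarith)

lemma A: "\<lbrakk>x<n; e<n; cyc_cc n e x z; x \<noteq> e\<rbrakk> \<Longrightarrow> cyc_oc n e x z"
  unfolding cyc_oc_def cyc_cc_def using [[simp_trace=false]] by (simp add: cdist_eq split: if_splits; linarith)

lemma A2: "\<lbrakk>x<n; e<n; cyc_oo n e x z\<rbrakk> \<Longrightarrow> cyc_oc n e x z"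
  unfolding cyc_oc_def cyc_oo_def by simp

lemma key:
  assumes n: "\<alpha> < n" "\<beta> < n" "\<zeta> < n" "\<eta> < n" "c < n"
    and o1: "cyc_oo n \<zeta> \<alpha> \<eta>" and o2: "cyc_oo n \<eta> \<beta> \<zeta>" and ne: "\<zeta> \<noteq> \<eta>"
    and cc: "cyc_cc n \<eta> c \<zeta>" and cne: "c \<noteq> \<eta>"
    and eV: "\<forall>x\<in>e. x < n \<and> cyc_cc n \<eta> x \<zeta>"
    and cb: "cross_before n \<alpha> \<beta> {\<zeta>, c} e"
    and xe: "x \<in> e"
  shows "cyc_oc n \<eta> x \<zeta>"
proof -
  obtain x1 y1 x2 y2 where h: "{\<zeta>, c} = {x1, y1}" "e = {x2, y2}"
    "cyc_oo n \<alpha> x1 \<beta>" "cyc_oo n \<alpha> x2 \<beta>" "cyc_oo n \<beta> y1 \<alpha>" "cyc_oo n \<beta> y2 \<alpha>"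
    "cdist n \<alpha> x1 \<le> cdist n \<alpha> x2" "cdist n \<beta> y2 \<le> cdist n \<beta> y1"
    using cb unfolding cross_before_def by blast
  have x1z: "x1 \<noteq> \<zeta>" using X1[OF n(1,2,3,4) o1 o2 ne] h(3) by blast
  have x1c: "x1 = c" using h(1) x1z by blast
  have x2n: "x2 < n" "cyc_cc n \<eta> x2 \<zeta>" using eV h(2) by auto
  have y2n: "y2 < n" "cyc_cc n \<eta> y2 \<zeta>" using eV h(2) by auto
  have "x2 \<noteq> \<eta>"
  proof
    assume "x2 = \<eta>"
    then show False using C[OF n(1,2,3,4,5) x2n(1) o1 o2 ne cc cne] h(3,7) x1c by blast
  qed
  then have 1: "cyc_oc n \<eta> x2 \<zeta>" using A x2n n by blast
  have "y2 \<noteq> \<eta>" using B[OF n(1,2,3,4) y2n(1) o1 o2 ne h(6)] .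
  then have 2: "cyc_oc n \<eta> y2 \<zeta>" using A y2n n by blast
  show ?thesis using xe h(2) 1 2 by blast
qed

theorem lemma3p6:
  fixes n :: nat and D D2 :: "nat set set" and \<zeta> \<eta> \<alpha> \<beta> :: nat and pi :: "nat list"
  assumes "3 \<le> n"
    and "is_dissection n {0..<n} D"
    and "D \<noteq> {}"
    and "{\<zeta>, \<eta>} \<in> D"
    and "D = {{\<zeta>, \<eta>}} \<union> D2"
    and "is_dissection n {\<epsilon> \<in> {0..<n}. cyc_cc n \<eta> \<epsilon> \<zeta>} D2"
    and "\<alpha> \<in> {\<epsilon> \<in> {0..<n}. cyc_oo n \<zeta> \<epsilon> \<eta>}"
    and "\<beta> \<in> {\<epsilon> \<in> {0..<n}. cyc_oo n \<eta> \<epsilon> \<zeta>}"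
    and "pi \<in> T_paths n D \<alpha> \<beta>"
    and "3 \<le> length pi"
    and "pi ! 1 = \<zeta>"
    and "pi ! 2 \<noteq> \<eta>"
  shows "\<forall>i. 1 \<le> i \<and> i < length pi \<longrightarrow> cyc_oc n \<eta> (pi ! i) \<zeta>"
proof (intro allI impI)
  fix i assume i: "1 \<le> i \<and> i < length pi"
  let ?V2 = "{\<epsilon> \<in> {0..<n}. cyc_cc n \<eta> \<epsilon> \<zeta>}"
  have dD: "is_internal n {0..<n} {\<zeta>, \<eta>}" using assms(2,4) unfolding is_dissection_def by blast
  have ne: "\<zeta> \<noteq> \<eta>" "\<zeta> < n" "\<eta> < n" using dD unfolding is_internal_def is_diagonal_def
    by (auto simp: doubleton_eq_iff)
  have an: "\<alpha> < n" and o1: "cyc_oo n \<zeta> \<alpha> \<eta>" using assms(7) by auto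
  have bn: "\<beta> < n" and o2: "cyc_oo n \<eta> \<beta> \<zeta>" using assms(8) by auto
  have P: "hd pi = \<alpha>" "last pi = \<beta>" "set pi \<subseteq> {0..<n}"
    "\<And>k. odd k \<and> Suc k < length pi \<Longrightarrow> {pi ! k, pi ! Suc k} \<in> D"
    "\<And>k l. odd k \<and> odd l \<and> k < l \<and> Suc l < length pi \<Longrightarrow>
        cross_before n \<alpha> \<beta> {pi ! k, pi ! Suc k} {pi ! l, pi ! Suc l}"
    "\<And>i. Suc i < length pi \<Longrightarrow> is_diagonal {0..<n} {pi ! i, pi ! Suc i}"
    using assms(9) unfolding T_paths_def by auto
  have inD: "\<And>e. e \<in> D \<Longrightarrow> \<forall>x\<in>e. x < n \<and> cyc_cc n \<eta> x \<zeta>"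
  proof -
    fix e assume "e \<in> D"
    then consider "e = {\<zeta>, \<eta>}" | "e \<in> D2" using assms(5) by blast
    then show "\<forall>x\<in>e. x < n \<and> cyc_cc n \<eta> x \<zeta>"
    proof cases
      case 1
      have "cyc_cc n \<eta> \<eta> \<zeta>" "cyc_cc n \<eta> \<zeta> \<zeta>" unfolding cyc_cc_def cdist_def by auto
      then show ?thesis using 1 ne by auto
    next
      case 2
      then have "is_internal n ?V2 e" using assms(6) unfolding is_dissection_def by blast
      then show ?thesis unfolding is_internal_def is_diagonal_def by auto
    qed
  qed
  let ?c = "pi ! 2"
  have cD: "{\<zeta>, ?c} \<in> D" using P(4)[of 1] assms(10,11) by (simp add: numeral_2_eq_2)
  have cn: "?c < n" "cyc_cc n \<eta> ?c \<zeta>" using inD[OF cD] by auto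
  have key2: "cyc_oc n \<eta> x \<zeta>" if "e \<in> D" "cross_before n \<alpha> \<beta> {\<zeta>, ?c} e" "x \<in> e" for e x
    using key[OF an bn ne(2,3) cn(1) o1 o2 ne(1) cn(2) assms(12) inD[OF that(1)] that(2,3)] .
  show "cyc_oc n \<eta> (pi ! i) \<zeta>"
  proof (cases "i = length pi - 1")
    case True
    then have "pi ! i = \<beta>" using P(2) i assms(10) by (metis last_conv_nth list.size(3) not_numeral_le_zero)
    then show ?thesis using A2 o2 bn ne by blast
  next
    case False
    show ?thesis
    proof (cases "i \<le> 2")
      case True
      then consider "i = 1" | "i = 2" using i by linarith
      then show ?thesis
      proof cases
        case 1
        have "cyc_cc n \<eta> \<zeta> \<zeta>" unfolding cyc_cc_def by simp
        then show ?thesis using 1 assms(11) A ne by auto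
      next
        case 2
        then show ?thesis using A cn assms(12) ne by auto
      qed
    next
      case False2: False
      define l where "l = (if odd i then i else i - 1)"
      have l: "odd l" "1 < l" "Suc l < length pi" "pi ! i \<in> {pi ! l, pi ! Suc l}"
        using False False2 i unfolding l_def by auto
      have "cross_before n \<alpha> \<beta> {pi ! 1, pi ! Suc 1} {pi ! l, pi ! Suc l}"
        using P(5)[of 1 l] l by auto
      then have cb: "cross_before n \<alpha> \<beta> {\<zeta>, ?c} {pi ! l, pi ! Suc l}"
        using assms(11) by (simp add: numeral_2_eq_2)
      show ?thesis using key2[OF P(4)[of l] cb l(4)] l by auto
    qed
  qed
qed

end
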